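(* There exist an instance space $\mathcal{X}$ and a class $\mathcal{H}\subseteq\{\pm1\}^{\mathcal{X}}$ such that for every local learner $\mathbb{A}$ and every sample size $m\in\mathbb{N}$ there exists a perturbation set $\mathcal{U}:\mathcal{X}\to 2^{\mathcal{X}}$ for which: (1) there is a distribution $P\in\mathrm{RE}(\mathcal{H},\mathcal{U})$ with $\mathbb{E}_{S\sim P^m}\, R_{\mathcal{U}}(\mathbb{A}(S_{\mathcal{U}});P)\ge \frac16$, i.e. $\mathbb{A}$ fails to robustly learn $\mathcal{H}$ with respect to $\mathcal{U}$ using $m$ samples; and (2) $\mathcal{H}$ is robustly learnable with respect to $\mathcal{U}$ with $0$ samples by a (non-local) learner which may use full knowledge of $\mathcal{U}$: there is a single predictor $f:\mathcal{X}\to\{\pm1\}$ with $R_{\mathcal{U}}(f;\mathcal{D})=0$ for every $\mathcal{D}\in\mathrm{RE}(\mathcal{H},\mathcal{U})$.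
   Context: Let $\mathcal{Y}=\{\pm1\}$. For a perturbation set $\mathcal{U}:\mathcal{X}\to2^{\mathcal{X}}$, a distribution $\mathcal{D}$ on $\mathcal{X}\times\mathcal{Y}$ and $h:\mathcal{X}\to\mathcal{Y}$, the robust risk is $R_{\mathcal{U}}(h;\mathcal{D})=\mathbb{E}_{(x,y)\sim\mathcal{D}}\big[\sup_{z\in\mathcal{U}(x)}\mathbb{1}\{h(z)\neq y\}\big]$. $\mathrm{RE}(\mathcal{H},\mathcal{U})$ denotes the set of distributions $\mathcal{D}$ on $\mathcal{X}\times\mathcal{Y}$ that are robustly realizable, i.e. there is $h^*\in\mathcal{H}$ with $R_{\mathcal{U}}(h^*;\mathcal{D})=0$. A local learner for $\mathcal{H}$ is a map $\mathbb{A}:(\mathcal{X}\times\mathcal{Y}\times2^{\mathcal{X}})^*\to\mathcal{Y}^{\mathcal{X}}$ (it may depend on $\mathcal{H}$ but not on $\mathcal{U}$); given a perturbation set $\mathcal{U}$ and a sample $S=((x_i,y_i))_{i=1}^m$, it is run on $S_{\mathcal{U}}=((x_i,y_i,\mathcal{U}(x_i)))_{i=1}^m$, so it only sees the perturbation sets of the training points. *)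

theory Defs
  imports "HOL-Probability.Probability"
begin

text \<open>Labels \<open>{+1,-1}\<close> are encoded as bool (True = +1, False = -1).
  The instance space is the countable type nat; distributions on X x Y are pmfs
  (on a countable space with the discrete sigma-algebra, these are all distributions).\<close>

type_synonym inst = nat
type_synonym label = bool

text \<open>Robust risk: E_{(x,y)~D} [ sup_{z in U x} 1{h z ~= y} ]; the sup of the 0/1 indicators
  is written out as the indicator of (EX z in U x. h z ~= y) (sup over empty set = 0).\<close>
definition robust_risk ::
  "(inst \<Rightarrow> inst set) \<Rightarrow> (inst \<Rightarrow> label) \<Rightarrow> (inst \<times> label) pmf \<Rightarrow> real" where
  "robust_risk U h D =
     measure_pmf.expectation D (\<lambda>(x, y). (if \<exists>z\<in>U x. h z \<noteq> y then 1 else 0 :: real))"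

definition RE :: "(inst \<Rightarrow> label) set \<Rightarrow> (inst \<Rightarrow> inst set) \<Rightarrow> (inst \<times> label) pmf set" where
  "RE H U = {D. \<exists>h\<in>H. robust_risk U h D = 0}"

type_synonym local_learner = "(inst \<times> label \<times> inst set) list \<Rightarrow> (inst \<Rightarrow> label)"

definition annotate :: "(inst \<Rightarrow> inst set) \<Rightarrow> (inst \<times> label) list \<Rightarrow> (inst \<times> label \<times> inst set) list" where
  "annotate U S = map (\<lambda>(x, y). (x, y, U x)) S"

end

theory Submission
  imports Defs
begin

definition Uf :: "nat \<Rightarrow> bool list \<Rightarrow> nat \<Rightarrow> nat set" where
  "Uf n ys z = (if 2 \<le> z \<and> z - 2 < n then {z, if ys!(z-2) then 0 else 1} else {})"

definition Pf :: "nat \<Rightarrow> bool list \<Rightarrow> (nat \<times> bool) pmf" where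
  "Pf n ys = map_pmf (\<lambda>i. (i+2, ys!i)) (pmf_of_set {..<n})"

definition ff :: "nat \<Rightarrow> bool list \<Rightarrow> nat \<Rightarrow> bool" where
  "ff n ys z = (z = 0 \<or> 0 \<in> Uf n ys z)"

definition H0 :: "(nat \<Rightarrow> bool) set" where
  "H0 = {h. h 0 \<and> \<not> h 1}"

lemma risk_zero_iff:
  "robust_risk U h D = 0 \<longleftrightarrow> (\<forall>(x,y)\<in>set_pmf D. \<forall>z\<in>U x. h z = y)"
proof -
  have int: "integrable (measure_pmf D) (\<lambda>(x, y). (if \<exists>z\<in>U x. h z \<noteq> y then 1 else 0 :: real))"
    by (rule measure_pmf.integrable_const_bound[where B=1]) auto
  show ?thesis
    unfolding robust_risk_def
    by (subst measure_pmf.integral_nonneg_eq_0_iff_AE_banach[OF int])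
       (auto simp: AE_measure_pmf_iff split: if_splits)
qed

lemma replicate_map_pmf:
  "replicate_pmf m (map_pmf g p) = map_pmf (map g) (replicate_pmf m p)"
  by (induction m) (simp_all add: map_pmf_def bind_assoc_pmf bind_return_pmf)

lemma risk_Pf:
  assumes "n > 0"
  shows "robust_risk (Uf n ys) g (Pf n ys) =
     (\<Sum>i<n. (if \<exists>z\<in>Uf n ys (i+2). g z \<noteq> ys!i then 1 else 0)) / real n"
  unfolding robust_risk_def Pf_def using assms
  by (simp only: integral_map_pmf, subst integral_pmf_of_set) auto

definition GG :: "local_learner \<Rightarrow> nat \<Rightarrow> bool list \<Rightarrow> nat list \<Rightarrow> (nat \<Rightarrow> bool)" where
  "GG A n ys I = A (annotate (Uf n ys) (map (\<lambda>i. (i+2, ys!i)) I))"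

lemma GG_flip:
  assumes "i \<notin> set I"
  shows "GG A n (ys[i := b]) I = GG A n ys I"
proof -
  have "map (\<lambda>(x, y). (x, y, Uf n (ys[i := b]) x)) (map (\<lambda>j. (j+2, ys[i := b]!j)) I)
      = map (\<lambda>(x, y). (x, y, Uf n ys x)) (map (\<lambda>j. (j+2, ys!j)) I)"
  proof -
    have e: "ys[i := b] ! j = ys ! j" if "j \<in> set I" for j
      using assms that by (metis nth_list_update_neq)
    show ?thesis unfolding map_map
      by (rule map_cong[OF refl]) (simp add: e Uf_def)
  qed
  then show ?thesis unfolding GG_def annotate_def by (rule arg_cong)
qed

lemma flip_sum:
  assumes "i < n" "i \<notin> set I"
  shows "(\<Sum>ys\<in>{ys. set ys \<subseteq> UNIV \<and> length ys = n}.
           (if GG A n ys I (i+2) \<noteq> ys!i then 1 else 0 :: real))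
         = real (card {ys::bool list. set ys \<subseteq> UNIV \<and> length ys = n}) / 2"
proof -
  let ?Y = "{ys::bool list. set ys \<subseteq> UNIV \<and> length ys = n}"
  let ?e = "\<lambda>ys. (if GG A n ys I (i+2) \<noteq> ys!i then 1 else 0 :: real)"
  let ?fl = "\<lambda>ys::bool list. ys[i := \<not> ys!i]"
  have r: "sum ?e ?Y = sum (\<lambda>ys. ?e (?fl ys)) ?Y"
  proof -
    have ff: "?fl (?fl ys) = ys" for ys
      by (cases "i < length ys") (auto simp: list_update_id list_update_beyond)
    show ?thesis
      by (rule sum.reindex_bij_witness[where i="?fl" and j="?fl"]) (simp_all only: ff, auto)
  qed
  have c: "?e (?fl ys) = 1 - ?e ys" if "ys \<in> ?Y" for ys
  proof -
    have "GG A n (?fl ys) I = GG A n ys I" using assms(2) by (rule GG_flip)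
    moreover have "?fl ys ! i = (\<not> ys!i)" using that assms by simp
    ultimately show ?thesis by simp
  qed
  have "sum ?e ?Y = sum (\<lambda>ys. 1 - ?e ys) ?Y"
    unfolding r by (rule sum.cong[OF refl], rule c)
  also have "\<dots> = real (card ?Y) - sum ?e ?Y"
    by (simp add: sum_subtractf)
  finally show ?thesis by simp
qed

lemma pointwise:
  assumes n: "n = 2*m+1" and I: "set I \<subseteq> {..<n}" "length I = m"
  shows "real (card {ys::bool list. set ys \<subseteq> UNIV \<and> length ys = n}) / 6 \<le>
    (\<Sum>ys\<in>{ys. set ys \<subseteq> UNIV \<and> length ys = n}. robust_risk (Uf n ys) (GG A n ys I) (Pf n ys))"
proof -
  let ?Y = "{ys::bool list. set ys \<subseteq> UNIV \<and> length ys = n}"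
  let ?K = "{..<n} - set I"
  let ?e = "\<lambda>ys i. (if GG A n ys I (i+2) \<noteq> ys!i then 1 else 0 :: real)"
  have fY: "finite ?Y" by (rule finite_lists_length_eq) simp
  have npos: "n > 0" using n by simp
  have cK: "card ?K \<ge> m + 1"
  proof -
    have "card ?K = n - card (set I)" using I by (simp add: card_Diff_subset)
    moreover have "card (set I) \<le> m" using I card_length by metis
    ultimately show ?thesis using n by simp
  qed
  have step1: "(\<Sum>i\<in>?K. ?e ys i) / real n \<le> robust_risk (Uf n ys) (GG A n ys I) (Pf n ys)" for ys
  proof -
    have "(\<Sum>i\<in>?K. ?e ys i) \<le> (\<Sum>i<n. ?e ys i)"
      by (rule sum_mono2) auto
    also have "\<dots> \<le> (\<Sum>i<n. (if \<exists>z\<in>Uf n ys (i+2). GG A n ys I z \<noteq> ys!i then 1 else 0))"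
      by (rule sum_mono) (auto simp: Uf_def)
    finally show ?thesis using npos by (simp add: risk_Pf divide_right_mono)
  qed
  have "(\<Sum>ys\<in>?Y. (\<Sum>i\<in>?K. ?e ys i) / real n) = (\<Sum>i\<in>?K. (\<Sum>ys\<in>?Y. ?e ys i)) / real n"
    by (simp only: sum_divide_distrib[symmetric], subst sum.swap, rule refl)
  also have "\<dots> = (\<Sum>i\<in>?K. real (card ?Y) / 2) / real n"
    by (rule arg_cong[where f="\<lambda>x. x / real n"], rule sum.cong[OF refl], rule flip_sum) auto
  also have "\<dots> = real (card ?K) * real (card ?Y) / (2 * real n)" by simp
  also have "\<dots> \<ge> real (card ?Y) / 6"
  proof -
    have "real (card ?K) \<ge> real m + 1" using cK by simp
    hence "real (card ?K) * real (card ?Y) \<ge> (real m + 1) * real (card ?Y)"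
      by (simp add: mult_right_mono)
    moreover have "(real m + 1) * real (card ?Y) / (2 * real n) \<ge> real (card ?Y) / 6"
      using n by (simp add: field_simps)
    ultimately show ?thesis using npos
      by (smt (verit) divide_right_mono of_nat_0_le_iff)
  qed
  finally have "real (card ?Y) / 6 \<le> (\<Sum>ys\<in>?Y. (\<Sum>i\<in>?K. ?e ys i) / real n)" .
  also have "\<dots> \<le> (\<Sum>ys\<in>?Y. robust_risk (Uf n ys) (GG A n ys I) (Pf n ys))"
    by (rule sum_mono, rule step1)
  finally show ?thesis .
qed

lemma part2:
  assumes "D \<in> RE H0 (Uf n ys)"
  shows "robust_risk (Uf n ys) (ff n ys) D = 0"
proof -
  obtain h where h: "h \<in> H0" "robust_risk (Uf n ys) h D = 0" using assms by (auto simp: RE_def)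
  have sup: "\<forall>(x,y)\<in>set_pmf D. \<forall>z\<in>Uf n ys x. h z = y" using h(2) by (simp add: risk_zero_iff)
  have "\<forall>(x,y)\<in>set_pmf D. \<forall>z\<in>Uf n ys x. ff n ys z = y"
  proof (intro ballI, clarify)
    fix x y z assume xy: "(x,y) \<in> set_pmf D" and z: "z \<in> Uf n ys x"
    have hx: "\<forall>z\<in>Uf n ys x. h z = y" using sup xy by auto
    have x: "2 \<le> x" "x - 2 < n" using z by (auto simp: Uf_def split: if_splits)
    show "ff n ys z = y"
    proof (cases "ys!(x-2)")
      case True
      then have U: "Uf n ys x = {x, 0}" using x by (simp add: Uf_def)
      have "y = True" using hx h(1) U by (auto simp: H0_def)
      then show ?thesis using z U x True by (auto simp: ff_def Uf_def)
    next
      case False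
      then have U: "Uf n ys x = {x, 1}" using x by (simp add: Uf_def)
      have "y = False" using hx h(1) U by (auto simp: H0_def)
      then show ?thesis using z U x False by (auto simp: ff_def Uf_def)
    qed
  qed
  then show ?thesis by (simp add: risk_zero_iff)
qed

lemma P_in_RE:
  assumes "n > 0"
  shows "Pf n ys \<in> RE H0 (Uf n ys)"
proof -
  have "ff n ys \<in> H0" by (auto simp: H0_def ff_def Uf_def)
  moreover have "robust_risk (Uf n ys) (ff n ys) (Pf n ys) = 0"
    unfolding risk_zero_iff Pf_def using assms
    by (auto simp: ff_def Uf_def)
  ultimately show ?thesis by (auto simp: RE_def)
qed

lemma part1:
  fixes A :: local_learner
  assumes n: "n = 2*m+1"
  shows "\<exists>ys. measure_pmf.expectation (replicate_pmf m (Pf n ys))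
            (\<lambda>S. robust_risk (Uf n ys) (A (annotate (Uf n ys) S)) (Pf n ys)) \<ge> 1 / 6"
proof (rule ccontr)
  assume C: "\<not> ?thesis"
  let ?Y = "{ys::bool list. set ys \<subseteq> UNIV \<and> length ys = n}"
  let ?Q = "replicate_pmf m (pmf_of_set {..<n})"
  let ?E = "\<lambda>ys. measure_pmf.expectation (replicate_pmf m (Pf n ys))
            (\<lambda>S. robust_risk (Uf n ys) (A (annotate (Uf n ys) S)) (Pf n ys))"
  let ?R = "\<lambda>ys I. robust_risk (Uf n ys) (GG A n ys I) (Pf n ys)"
  have fY: "finite ?Y" by (rule finite_lists_length_eq) simp
  have neY: "?Y \<noteq> {}" by (auto intro!: exI[of _ "replicate n True"])
  have npos: "n > 0" using n by simp
  have E: "?E ys = measure_pmf.expectation ?Q (?R ys)" for ys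
    unfolding Pf_def replicate_map_pmf integral_map_pmf GG_def by simp
  have supp: "set_pmf ?Q = {I \<in> lists {..<n}. length I = m}"
  proof -
    have "set_pmf (pmf_of_set {..<n}) = {..<n}" by (rule set_pmf_of_set) (use npos in auto)
    then show ?thesis by (simp add: set_replicate_pmf)
  qed
  have fQ: "finite (set_pmf ?Q)"
  proof -
    have "{I \<in> lists {..<n}. length I = m} = {I. set I \<subseteq> {..<n} \<and> length I = m}" by auto
    then show ?thesis unfolding supp by (simp add: finite_lists_length_eq)
  qed
  have "(\<Sum>ys\<in>?Y. ?E ys) = measure_pmf.expectation ?Q (\<lambda>I. \<Sum>ys\<in>?Y. ?R ys I)"
    unfolding E using Bochner_Integration.integral_sum[where I="?Y" and M="measure_pmf ?Q" and f="?R", OF integrable_measure_pmf_finite[OF fQ]]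
    by simp
  also have "\<dots> \<ge> real (card ?Y) / 6"
    by (rule measure_pmf.integral_ge_const[OF integrable_measure_pmf_finite[OF fQ]])
       (unfold AE_measure_pmf_iff supp, intro ballI pointwise[OF n], auto)
  finally have ge: "real (card ?Y) / 6 \<le> (\<Sum>ys\<in>?Y. ?E ys)" .
  have "(\<Sum>ys\<in>?Y. ?E ys) < (\<Sum>ys\<in>?Y. 1/6)"
  proof (rule sum_strict_mono[OF fY neY])
    fix ys assume "ys \<in> ?Y"
    from C have "\<not> (?E ys \<ge> 1/6)" by blast
    then show "?E ys < 1/6" by linarith
  qed
  then show False using ge by simp
qed

theorem mainTheorem1:
  shows "\<exists>H :: (inst \<Rightarrow> label) set.
     \<forall>(A :: local_learner) (m :: nat). \<exists>U :: inst \<Rightarrow> inst set.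
       (\<exists>P \<in> RE H U.
          measure_pmf.expectation (replicate_pmf m P)
            (\<lambda>S. robust_risk U (A (annotate U S)) P) \<ge> 1 / 6)
     \<and> (\<exists>f :: inst \<Rightarrow> label. \<forall>D \<in> RE H U. robust_risk U f D = 0)"
proof (rule exI[of _ H0], intro allI)
  fix A :: local_learner and m :: nat
  obtain ys where ys: "measure_pmf.expectation (replicate_pmf m (Pf (2*m+1) ys))
            (\<lambda>S. robust_risk (Uf (2*m+1) ys) (A (annotate (Uf (2*m+1) ys) S)) (Pf (2*m+1) ys)) \<ge> 1 / 6"
    using part1[OF refl] by blast
  show "\<exists>U. (\<exists>P \<in> RE H0 U.
          measure_pmf.expectation (replicate_pmf m P)
            (\<lambda>S. robust_risk U (A (annotate U S)) P) \<ge> 1 / 6)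
     \<and> (\<exists>f :: inst \<Rightarrow> label. \<forall>D \<in> RE H0 U. robust_risk U f D = 0)"
  proof (intro exI[of _ "Uf (2*m+1) ys"] conjI)
    show "\<exists>P \<in> RE H0 (Uf (2*m+1) ys).
          measure_pmf.expectation (replicate_pmf m P)
            (\<lambda>S. robust_risk (Uf (2*m+1) ys) (A (annotate (Uf (2*m+1) ys) S)) P) \<ge> 1 / 6"
      using ys P_in_RE[of "2*m+1" ys] by auto
    show "\<exists>f. \<forall>D \<in> RE H0 (Uf (2*m+1) ys). robust_risk (Uf (2*m+1) ys) f D = 0"
      using part2 by blast
  qed
qed

end
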